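(* Let $U$ be an intersecting family of polynomials over $\mathbb{F}_q$ of degree at most $2$. Let $c\in\mathbb{F}_q$ and $\alpha,\beta\in\mathbb{F}_q$, and suppose that $U$ contains more than $\lfloor (q+1)/2\rfloor$ polynomials $h_i$ whose coefficient of $x^2$ equals $c$ and which satisfy $h_i(\alpha)=\beta$. Then every polynomial $f\in U$ whose coefficient of $x^2$ is not $c$ satisfies $f(\alpha)=\beta$.
   Context: A set of polynomials over $\mathbb{F}_q$ is intersecting if for any two members $f_1,f_2$ the graphs $\{(x,f_i(x)):x\in\mathbb{F}_q\}$ share at least one point. *)

theory Defs
  imports "HOL-Computational_Algebra.Polynomial"
begin

definition intersecting :: "'a::{finite,field} poly set \<Rightarrow> bool" where
  "intersecting U \<longleftrightarrow> (\<forall>f1\<in>U. \<forall>f2\<in>U. \<exists>x. poly f1 x = poly f2 x)"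

end

theory Submission
  imports Defs
begin

lemma atMost2: "{..2::nat} = {0,1,2}" by auto

lemma poly_deg2:
  fixes p :: "'a::comm_ring_1 poly"
  assumes "degree p \<le> 2"
  shows "poly p x = coeff p 0 + coeff p 1 * x + coeff p 2 * x^2"
proof -
  have "poly p x = (\<Sum>i\<le>2. coeff p i * x ^ i)"
    unfolding poly_altdef
    by (rule sum.mono_neutral_left) (use assms in \<open>auto intro: le_degree\<close>)
  also have "\<dots> = coeff p 0 + coeff p 1 * x + coeff p 2 * x^2"
    by (simp add: atMost2)
  finally show ?thesis .
qed

lemma deg2_eq:
  fixes p q :: "'a::comm_ring_1 poly"
  assumes "degree p \<le> 2" "degree q \<le> 2" "coeff p 0 = coeff q 0" "coeff p 1 = coeff q 1"
    "coeff p 2 = coeff q 2"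
  shows "p = q"
proof (rule poly_eqI)
  fix n
  show "coeff p n = coeff q n"
  proof (cases "n \<le> 2")
    case True
    then have "n = 0 \<or> n = 1 \<or> n = 2" by auto
    then show ?thesis using assms(3,4,5) by (elim disjE) simp_all
  next
    case False
    then have "degree p < n" "degree q < n" using assms(1,2) by linarith+
    then show ?thesis by (simp add: coeff_eq_0)
  qed
qed

lemma key_arith: "\<And>q n::nat. 2*n \<le> q - 1 + 2 \<Longrightarrow> n > (q+1) div 2 \<Longrightarrow> q \<ge> 1 \<Longrightarrow> False"
  by presburger

theorem lemma5:
  fixes U :: "'a::{finite,field} poly set" and c \<alpha> \<beta> :: 'a
  assumes "intersecting U"
    and "\<forall>f\<in>U. degree f \<le> 2"
    and "card {h \<in> U. coeff h 2 = c \<and> poly h \<alpha> = \<beta>} > (card (UNIV :: 'a set) + 1) div 2"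
  shows "\<forall>f\<in>U. coeff f 2 \<noteq> c \<longrightarrow> poly f \<alpha> = \<beta>"
proof (intro ballI impI, rule ccontr)
  fix f assume fU: "f \<in> U" and fc: "coeff f 2 \<noteq> c" and fa: "poly f \<alpha> \<noteq> \<beta>"
  define H where "H = {h \<in> U. coeff h 2 = c \<and> poly h \<alpha> = \<beta>}"
  define A where "A = coeff f 2 - c"
  define d where "d = poly f \<alpha> - \<beta>"
  have A0: "A \<noteq> 0" using fc by (simp add: A_def)
  have d0: "d \<noteq> 0" using fa by (simp add: d_def)
  define R where "R h = {x. poly f x = poly h x}" for h
  define B where "B h = coeff f 1 - coeff h 1" for h
  define E where "E h = coeff f 0 - coeff h 0" for h
  have degf: "degree f \<le> 2" using assms(2) fU by auto
  have g: "poly f x - poly h x = A * x^2 + B h * x + E h" if "h \<in> H" for h x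
  proof -
    have "degree h \<le> 2" using that assms(2) by (auto simp: H_def)
    then show ?thesis using that degf
      by (simp add: poly_deg2 A_def B_def E_def H_def algebra_simps)
  qed
  have Rg: "x \<in> R h \<longleftrightarrow> A * x^2 + B h * x + E h = 0" if "h \<in> H" for h x
    using g[OF that, of x] by (auto simp: R_def)
  have gal: "A * \<alpha>^2 + B h * \<alpha> + E h = d" if "h \<in> H" for h
    using g[OF that, of \<alpha>] that by (auto simp: d_def H_def)
  have Rne: "R h \<noteq> {}" if "h \<in> H" for h
    using assms(1) fU that unfolding intersecting_def R_def H_def by auto
  have Ral: "\<alpha> \<notin> R h" if "h \<in> H" for h
    using that fa by (auto simp: R_def H_def)
  have disj: "R h1 \<inter> R h2 = {}" if "h1 \<in> H" "h2 \<in> H" "h1 \<noteq> h2" for h1 h2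
  proof (rule ccontr)
    assume "R h1 \<inter> R h2 \<noteq> {}"
    then obtain x where x1: "x \<in> R h1" and x2: "x \<in> R h2" by auto
    have xa: "x \<noteq> \<alpha>" using Ral[OF that(1)] x1 by auto
    have d1: "degree h1 \<le> 2" "degree h2 \<le> 2" using that assms(2) by (auto simp: H_def)
    define u where "u = coeff h1 0 - coeff h2 0"
    define v where "v = coeff h1 1 - coeff h2 1"
    have c12: "coeff h1 2 = coeff h2 2" using that(1,2) by (simp add: H_def)
    have "poly h1 \<alpha> = poly h2 \<alpha>" using that(1,2) by (simp add: H_def)
    then have e1: "u + v * \<alpha> = 0"
      using d1 c12 unfolding poly_deg2[OF d1(1)] poly_deg2[OF d1(2)] u_def v_def
      by (simp add: algebra_simps)
    have "poly h1 x = poly h2 x" using x1 x2 by (simp add: R_def)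
    then have e2: "u + v * x = 0"
      using d1 c12 unfolding poly_deg2[OF d1(1)] poly_deg2[OF d1(2)] u_def v_def
      by (simp add: algebra_simps)
    have "v * (x - \<alpha>) = (u + v * x) - (u + v * \<alpha>)" by (simp add: algebra_simps)
    then have "v * (x - \<alpha>) = 0" using e1 e2 by simp
    then have v0: "v = 0" using xa by simp
    then have u0: "u = 0" using e1 by simp
    have "h1 = h2"
      using d1 u0 v0 that(1,2) by (intro deg2_eq) (auto simp: u_def v_def H_def)
    then show False using that(3) by simp
  qed
  have second: "- (B h / A) - r \<in> R h" if "h \<in> H" "r \<in> R h" for h r
  proof -
    have "A * r^2 + B h * r + E h = 0" using Rg[OF that(1)] that(2) by simp
    moreover have "A * (- (B h / A) - r)^2 + B h * (- (B h / A) - r) + E h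
        = A * r^2 + B h * r + E h"
      using A0 by (simp add: field_simps power2_eq_square)
    ultimately have "A * (- (B h / A) - r)^2 + B h * (- (B h / A) - r) + E h = 0" by simp
    then show ?thesis using Rg[OF that(1)] by simp
  qed
  define D where "D = {h \<in> H. \<exists>r. R h = {r}}"
  define P where "P = [:A * \<alpha>^2 - d, - 2 * A * \<alpha>, A:]"
  have degP: "degree P = 2" using A0 by (simp add: P_def)
  have Droot: "poly P (the_elem (R h)) = 0" if hD: "h \<in> D" for h
  proof -
    obtain r where hH: "h \<in> H" and Rr: "R h = {r}" using hD unfolding D_def by blast
    have "- (B h / A) - r = r" using second[OF hH] Rr by auto
    then have "- B h = 2 * A * r" using A0 by (simp add: field_simps)
    then have Bh: "B h = - 2 * A * r" by (metis minus_minus mult_minus_left)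
    have "A * r^2 + B h * r + E h = 0" using Rg[OF hH] Rr by auto
    then have Eh: "E h = A * r^2" using Bh by (simp add: algebra_simps power2_eq_square)
    have "A * \<alpha>^2 + B h * \<alpha> + E h = d" using gal[OF hH] .
    then have "A * \<alpha>^2 - d + (- 2 * A * \<alpha>) * r + A * r^2 = 0"
      using Bh Eh by (simp add: algebra_simps)
    then show ?thesis using Rr by (simp add: P_def algebra_simps power2_eq_square)
  qed
  have injD: "inj_on (\<lambda>h. the_elem (R h)) D"
  proof (rule inj_onI)
    fix h1 h2 assume "h1 \<in> D" "h2 \<in> D" "the_elem (R h1) = the_elem (R h2)"
    then obtain r1 r2 where h1: "h1 \<in> H" "R h1 = {r1}" and h2: "h2 \<in> H" "R h2 = {r2}"
      and "r1 = r2" unfolding D_def by auto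
    then have "R h1 \<inter> R h2 \<noteq> {}" by simp
    then show "h1 = h2" using disj h1(1) h2(1) by blast
  qed
  have cardD: "card D \<le> 2"
  proof -
    have "card D = card ((\<lambda>h. the_elem (R h)) ` D)" using injD by (simp add: card_image)
    also have "\<dots> \<le> card {x. poly P x = 0}"
      using Droot degP by (intro card_mono poly_roots_finite) auto
    also have "\<dots> \<le> 2" using card_poly_roots_bound[of P] degP by (metis degree_0 zero_neq_numeral)
    finally show ?thesis .
  qed
  have "card H > 0" using assms(3) unfolding H_def by linarith
  then have fin: "finite H" by (rule card_ge_0_finite)
  have each: "2 \<le> card (R h) + (if h \<in> D then 1 else 0)" if hH: "h \<in> H" for h
  proof (cases "h \<in> D")
    case True
    then show ?thesis using Rne[OF hH] by (simp add: card_gt_0_iff Suc_le_eq)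
  next
    case False
    obtain r where r: "r \<in> R h" using Rne[OF hH] by auto
    have "R h \<noteq> {r}" using False hH by (auto simp: D_def)
    then obtain s where "s \<in> R h" "s \<noteq> r" using r by auto
    then have "card {r, s} \<le> card (R h)" using r by (intro card_mono) auto
    then show ?thesis using False \<open>s \<noteq> r\<close> by simp
  qed
  have "2 * card H = (\<Sum>h\<in>H. 2)" by simp
  also have "\<dots> \<le> (\<Sum>h\<in>H. card (R h) + (if h \<in> D then 1 else 0))"
    using each by (intro sum_mono) auto
  also have "\<dots> = (\<Sum>h\<in>H. card (R h)) + card D"
  proof -
    have "D \<subseteq> H" by (auto simp: D_def)
    then have "card D = card (H \<inter> D)" by (simp add: Int_absorb1)
    also have "\<dots> = (\<Sum>h\<in>H \<inter> D. 1)" by simp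
    also have "\<dots> = (\<Sum>h\<in>H. if h \<in> D then 1 else 0)"
      using fin by (rule sum.inter_restrict)
    finally show ?thesis by (simp add: sum.distrib)
  qed
  also have "(\<Sum>h\<in>H. card (R h)) = card (\<Union>h\<in>H. R h)"
    using disj fin by (intro card_UN_disjoint[symmetric]) auto
  also have "card (\<Union>h\<in>H. R h) \<le> card (UNIV - {\<alpha>} :: 'a set)"
    using Ral by (intro card_mono) auto
  also have "\<dots> = card (UNIV :: 'a set) - 1" by (simp add: card_Diff_singleton)
  finally have "2 * card H \<le> card (UNIV :: 'a set) - 1 + 2" using cardD by linarith
  moreover have "card H > (card (UNIV :: 'a set) + 1) div 2" using assms(3) by (simp add: H_def)
  moreover have "card (UNIV :: 'a set) \<ge> 1" by (simp add: Suc_le_eq card_gt_0_iff)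
  ultimately show False by (rule key_arith)
qed

end
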